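(* The stabilizer of $z^*$ in $G$ is the cyclic subgroup generated by $\exp(\mathrm{ad}\,z^* )$.
   Context: $\mathbb F$ is a field of characteristic zero, $\mathfrak{sl}_2$ the Lie algebra of $2\times2$ trace-zero matrices over $\mathbb F$. Let $x^*=\begin{pmatrix}1&-1\\1&-1\end{pmatrix}$, $y^*=\begin{pmatrix}0&0\\1&0\end{pmatrix}$, $z^*=\begin{pmatrix}0&-1\\0&0\end{pmatrix}$; $G$ is the subgroup of $\mathrm{Aut}_{\mathbb F}(\mathfrak{sl}_2)$ generated by $\exp(\mathrm{ad}\,x^* ),\exp(\mathrm{ad}\,y^* ),\exp(\mathrm{ad}\,z^* )$. *)

theory Defs
  imports "HOL-Analysis.Analysis" "HOL-Algebra.Bij" "HOL-Algebra.Generated_Groups"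
begin

type_synonym 'a mat2 = "'a ^ 2 ^ 2"

definition mk2 :: "'a \<Rightarrow> 'a \<Rightarrow> 'a \<Rightarrow> 'a \<Rightarrow> 'a mat2" where
  "mk2 a b c d = (\<chi> i j. if i = 1 then (if j = 1 then a else b) else (if j = 1 then c else d))"

definition trace2 :: "('a::comm_ring_1) mat2 \<Rightarrow> 'a" where
  "trace2 m = m $ 1 $ 1 + m $ 2 $ 2"

definition sl2 :: "('a::field) mat2 set" where
  "sl2 = {m. trace2 m = 0}"

definition lie_bracket :: "('a::comm_ring_1) mat2 \<Rightarrow> 'a mat2 \<Rightarrow> 'a mat2" where
  "lie_bracket x y = x ** y - y ** x"

definition ad :: "('a::comm_ring_1) mat2 \<Rightarrow> 'a mat2 \<Rightarrow> 'a mat2" where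
  "ad x = lie_bracket x"

text \<open>For nilpotent x the map ad x is nilpotent on the 4-dimensional space
  of 2x2 matrices, so (ad x)^k = 0 for k >= 4 and the truncated sum is exactly
  the exponential series.\<close>
definition smult2 :: "('a::times) \<Rightarrow> 'a mat2 \<Rightarrow> 'a mat2" where
  "smult2 c m = (\<chi> i j. c * m $ i $ j)"

definition exp_ad :: "('a::field_char_0) mat2 \<Rightarrow> ('a mat2 \<Rightarrow> 'a mat2)" where
  "exp_ad x = (\<lambda>m \<in> sl2. (\<Sum>k<4. smult2 (1 / of_nat (fact k)) ((ad x ^^ k) m)))"

definition xstar :: "('a::field) mat2" where "xstar = mk2 1 (-1) 1 (-1)"
definition ystar :: "('a::field) mat2" where "ystar = mk2 0 0 1 0"
definition zstar :: "('a::field) mat2" where "zstar = mk2 0 (-1) 0 0"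

definition Gsl2 :: "((('a::field_char_0) mat2 \<Rightarrow> 'a mat2) set)" where
  "Gsl2 = generate (BijGroup sl2) {exp_ad xstar, exp_ad ystar, exp_ad zstar}"

end

theory Submission
  imports Defs
begin

lemma mk2_nth[simp]:
  "mk2 a b c d $ 1 $ 1 = a" "mk2 a b c d $ 1 $ 2 = b"
  "mk2 a b c d $ 2 $ 1 = c" "mk2 a b c d $ 2 $ 2 = d"
  by (simp_all add: mk2_def)

lemma mat2_eq_iff: "(m::'a mat2) = n \<longleftrightarrow> m$1$1 = n$1$1 \<and> m$1$2 = n$1$2 \<and> m$2$1 = n$2$1 \<and> m$2$2 = n$2$2"
  by (simp add: vec_eq_iff forall_2)

lemma mk2_eq_iff[simp]: "mk2 a b c d = mk2 a' b' c' d' \<longleftrightarrow> a = a' \<and> b = b' \<and> c = c' \<and> d = d'"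
  by (simp add: mat2_eq_iff)

lemma mat2_mk2: "(m::'a mat2) = mk2 (m$1$1) (m$1$2) (m$2$1) (m$2$2)"
  by (simp add: mat2_eq_iff)

lemma mk2_mult[simp]: "mk2 a b c d ** mk2 e f g h = mk2 (a*e+b*g) (a*f+b*h) (c*e+d*g) (c*f+d*h)"
  by (simp add: mat2_eq_iff matrix_matrix_mult_def sum_2)

lemma mk2_add[simp]: "mk2 a b c d + mk2 e f g h = mk2 (a+e) (b+f) (c+g) (d+h)"
  by (simp add: mat2_eq_iff)

lemma mk2_diff[simp]: "mk2 a b c d - mk2 e f g h = mk2 (a-e) (b-f) (c-g) (d-h)"
  by (simp add: mat2_eq_iff)

lemma smult2_mk2[simp]: "smult2 k (mk2 a b c d) = mk2 (k*a) (k*b) (k*c) (k*d)"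
  by (simp add: mat2_eq_iff smult2_def)

lemma mk2_id: "mk2 1 0 0 1 = (mat 1 :: 'a::comm_ring_1 mat2)"
  by (simp add: mat2_eq_iff mat_def)

lemma sl2_iff: "(m::'a::field mat2) \<in> sl2 \<longleftrightarrow> (\<exists>p q r. m = mk2 p q r (-p))"
proof
  assume "m \<in> sl2"
  then have "m$1$1 + m$2$2 = 0" by (simp add: sl2_def trace2_def)
  then have "m = mk2 (m$1$1) (m$1$2) (m$2$1) (-(m$1$1))" by (simp add: mat2_eq_iff add_eq_0_iff)
  then show "\<exists>p q r. m = mk2 p q r (-p)" by blast
next
  assume "\<exists>p q r. m = mk2 p q r (-p)"
  then show "m \<in> sl2" by (auto simp: sl2_def trace2_def)
qed

lemma sum4: "(\<Sum>k<(4::nat). f k) = f 0 + f 1 + f 2 + (f 3::'a::comm_monoid_add)"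
  by (simp add: eval_nat_numeral)

lemma smult2_0[simp]: "smult2 c (0::'a::comm_ring_1 mat2) = 0"
  by (simp add: smult2_def vec_eq_iff)


type_synonym q4 = "int \<times> int \<times> int \<times> int"

definition Pm :: "q4 \<Rightarrow> 'a::field_char_0 mat2" where
  "Pm q = (case q of (a,b,c,d) \<Rightarrow> mk2 (of_int a) (of_int b) (of_int c) (of_int d))"
definition adjq :: "q4 \<Rightarrow> q4" where "adjq q = (case q of (a,b,c,d) \<Rightarrow> (d,-b,-c,a))"
definition detq :: "q4 \<Rightarrow> int" where "detq q = (case q of (a,b,c,d) \<Rightarrow> a*d-b*c)"
definition mulq :: "q4 \<Rightarrow> q4 \<Rightarrow> q4" where
  "mulq q r = (case q of (a,b,c,d) \<Rightarrow> case r of (e,f,g,h) \<Rightarrow> (a*e+b*g, a*f+b*h, c*e+d*g, c*f+d*h))"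
definition conjM :: "q4 \<Rightarrow> ('a::field_char_0 mat2 \<Rightarrow> 'a mat2)" where
  "conjM q = (\<lambda>m\<in>sl2. Pm q ** m ** Pm (adjq q))"

lemma Pm_mul: "(Pm (mulq q r) :: 'a::field_char_0 mat2) = Pm q ** Pm r"
  by (cases q; cases r) (simp add: Pm_def mulq_def)

lemma adjq_mul: "adjq (mulq q r) = mulq (adjq r) (adjq q)"
  by (cases q; cases r) (simp add: adjq_def mulq_def algebra_simps)

lemma detq_mul: "detq (mulq q r) = detq q * detq r"
  by (cases q; cases r) (simp add: detq_def mulq_def algebra_simps)

lemma adjq_adjq[simp]: "adjq (adjq q) = q"
  by (cases q) (simp add: adjq_def)

lemma detq_adjq[simp]: "detq (adjq q) = detq q"
  by (cases q) (simp add: adjq_def detq_def)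

lemma mulq_adjq: "detq q = 1 \<Longrightarrow> mulq (adjq q) q = (1,0,0,1)"
  by (cases q) (simp add: adjq_def detq_def mulq_def algebra_simps)

lemma Pm_id: "(Pm (1,0,0,1) :: 'a::field_char_0 mat2) = mat 1"
  by (simp add: Pm_def mk2_id)

lemma conj_sl2: "m \<in> sl2 \<Longrightarrow> (Pm q :: 'a::field_char_0 mat2) ** m ** Pm (adjq q) \<in> sl2"
  apply (cases q)
  apply (auto simp: sl2_iff)
  apply (simp add: Pm_def adjq_def sl2_def trace2_def)
  apply (simp add: algebra_simps)
  done

lemma conjM_conjM: "m \<in> sl2 \<Longrightarrow> conjM q (conjM r m) = (conjM (mulq q r) m :: 'a::field_char_0 mat2)"
  by (simp add: conjM_def conj_sl2 Pm_mul adjq_mul matrix_mul_assoc)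

lemma conjM_id: "m \<in> sl2 \<Longrightarrow> conjM (1,0,0,1) m = (m :: 'a::field_char_0 mat2)"
proof -
  have "adjq (1,0,0,1) = (1,0,0,1)" by (simp add: adjq_def)
  thus "m \<in> sl2 \<Longrightarrow> ?thesis" by (simp add: conjM_def Pm_id)
qed

lemma conjM_Bij: "detq q = 1 \<Longrightarrow> (conjM q :: 'a::field_char_0 mat2 \<Rightarrow> _) \<in> carrier (BijGroup sl2)"
  apply (simp add: BijGroup_def Bij_def)
  apply (rule conjI)
   apply (simp add: conjM_def)
  apply (rule bij_betw_byWitness[where f'="conjM (adjq q)"])
     apply (simp add: conjM_conjM mulq_adjq conjM_id)
    apply (metis adjq_adjq detq_adjq conjM_conjM mulq_adjq conjM_id)
   apply (auto simp: conjM_def conj_sl2 intro: conj_sl2[of _ "adjq q", simplified])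
  done

lemma conjM_mult: "detq q = 1 \<Longrightarrow> detq r = 1 \<Longrightarrow>
  conjM q \<otimes>\<^bsub>BijGroup sl2\<^esub> conjM r = (conjM (mulq q r) :: 'a::field_char_0 mat2 \<Rightarrow> _)"
proof -
  assume a: "detq q = 1" "detq r = 1"
  have b: "(conjM q :: 'a mat2 \<Rightarrow> _) \<in> Bij sl2" "(conjM r :: 'a mat2 \<Rightarrow> _) \<in> Bij sl2"
    using conjM_Bij[OF a(1)] conjM_Bij[OF a(2)] by (simp_all add: BijGroup_def)
  have "compose sl2 (conjM q) (conjM r) = (conjM (mulq q r) :: 'a mat2 \<Rightarrow> _)"
  proof
    fix m :: "'a mat2"
    show "compose sl2 (conjM q) (conjM r) m = conjM (mulq q r) m"
      by (cases "m \<in> sl2") (simp_all add: compose_def conjM_conjM, simp add: conjM_def)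
  qed
  then show ?thesis using b by (simp add: BijGroup_def)
qed

lemma conjM_one: "\<one>\<^bsub>BijGroup sl2\<^esub> = (conjM (1,0,0,1) :: 'a::field_char_0 mat2 \<Rightarrow> _)"
  apply (simp add: BijGroup_def)
  apply (rule ext)
  apply (simp add: conjM_id)
  apply (simp add: conjM_def)
  done

lemma conjM_inv: "detq q = 1 \<Longrightarrow>
  inv\<^bsub>BijGroup sl2\<^esub> conjM q = (conjM (adjq q) :: 'a::field_char_0 mat2 \<Rightarrow> _)"
  apply (rule group.inv_equality[OF group_BijGroup])
  apply (simp_all add: conjM_mult conjM_Bij mulq_adjq conjM_one)
  done

lemma tx: "exp_ad (xstar::'a::field_char_0 mat2) (mk2 p u r (-p)) = Pm (2,-1,1,0) ** mk2 p u r (-p) ** Pm (adjq (2,-1,1,0))"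
  unfolding exp_ad_def
  apply (simp add: sl2_iff sum4 eval_nat_numeral ad_def lie_bracket_def xstar_def Pm_def adjq_def algebra_simps)
  done

lemma exp_x: "exp_ad xstar = (conjM (2,-1,1,0) :: 'a::field_char_0 mat2 \<Rightarrow> _)"
proof
  fix m :: "'a mat2"
  show "exp_ad xstar m = conjM (2,-1,1,0) m"
  proof (cases "m \<in> sl2")
    case True
    then obtain p u r where m: "m = mk2 p u r (-p)" by (auto simp: sl2_iff)
    show ?thesis using True by (simp add: m conjM_def tx)
  qed (simp add: exp_ad_def conjM_def)
qed

lemma ty: "exp_ad (ystar::'a::field_char_0 mat2) (mk2 p u r (-p)) = Pm (1,0,1,1) ** mk2 p u r (-p) ** Pm (adjq (1,0,1,1))"
  unfolding exp_ad_def
  apply (simp add: sl2_iff sum4 eval_nat_numeral ad_def lie_bracket_def ystar_def Pm_def adjq_def algebra_simps)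
  done

lemma exp_y: "exp_ad ystar = (conjM (1,0,1,1) :: 'a::field_char_0 mat2 \<Rightarrow> _)"
proof
  fix m :: "'a mat2"
  show "exp_ad ystar m = conjM (1,0,1,1) m"
  proof (cases "m \<in> sl2")
    case True
    then obtain p u r where m: "m = mk2 p u r (-p)" by (auto simp: sl2_iff)
    show ?thesis using True by (simp add: m conjM_def ty)
  qed (simp add: exp_ad_def conjM_def)
qed

lemma tz: "exp_ad (zstar::'a::field_char_0 mat2) (mk2 p u r (-p)) = Pm (1,-1,0,1) ** mk2 p u r (-p) ** Pm (adjq (1,-1,0,1))"
  unfolding exp_ad_def
  apply (simp add: sl2_iff sum4 eval_nat_numeral ad_def lie_bracket_def zstar_def Pm_def adjq_def algebra_simps)
  done

lemma exp_z: "exp_ad zstar = (conjM (1,-1,0,1) :: 'a::field_char_0 mat2 \<Rightarrow> _)"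
proof
  fix m :: "'a mat2"
  show "exp_ad zstar m = conjM (1,-1,0,1) m"
  proof (cases "m \<in> sl2")
    case True
    then obtain p u r where m: "m = mk2 p u r (-p)" by (auto simp: sl2_iff)
    show ?thesis using True by (simp add: m conjM_def tz)
  qed (simp add: exp_ad_def conjM_def)
qed


definition Sgrp :: "('a::field_char_0 mat2 \<Rightarrow> 'a mat2) set" where
  "Sgrp = {conjM q | q. detq q = 1}"
definition Tgrp :: "('a::field_char_0 mat2 \<Rightarrow> 'a mat2) set" where
  "Tgrp = {conjM (1,k,0,1) | k. True}"

lemma Sgrp_subgroup: "subgroup (Sgrp :: ('a::field_char_0 mat2 \<Rightarrow> 'a mat2) set) (BijGroup sl2)"
proof
  show "(Sgrp :: ('a mat2 \<Rightarrow> 'a mat2) set) \<subseteq> carrier (BijGroup sl2)"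
    by (auto simp: Sgrp_def conjM_Bij)
  show "x \<otimes>\<^bsub>BijGroup sl2\<^esub> y \<in> Sgrp" if "x \<in> Sgrp" "y \<in> Sgrp" for x y :: "'a mat2 \<Rightarrow> 'a mat2"
  proof -
    from that obtain q r where h: "x = conjM q" "detq q = 1" "y = conjM r" "detq r = 1"
      unfolding Sgrp_def by blast
    have "x \<otimes>\<^bsub>BijGroup sl2\<^esub> y = conjM (mulq q r)" using h by (simp add: conjM_mult)
    moreover have "detq (mulq q r) = 1" using h by (simp add: detq_mul)
    ultimately show ?thesis unfolding Sgrp_def by blast
  qed
  show "\<one>\<^bsub>BijGroup sl2\<^esub> \<in> (Sgrp :: ('a mat2 \<Rightarrow> 'a mat2) set)"
  proof -
    have "detq (1,0,0,1) = 1" by (simp add: detq_def)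
    thus ?thesis unfolding Sgrp_def conjM_one by blast
  qed
  show "inv\<^bsub>BijGroup sl2\<^esub> x \<in> Sgrp" if "x \<in> Sgrp" for x :: "'a mat2 \<Rightarrow> 'a mat2"
  proof -
    from that obtain q where h: "x = conjM q" "detq q = 1"
      unfolding Sgrp_def by blast
    have "inv\<^bsub>BijGroup sl2\<^esub> x = conjM (adjq q)" using h by (simp add: conjM_inv)
    moreover have "detq (adjq q) = 1" using h by simp
    ultimately show ?thesis unfolding Sgrp_def by blast
  qed
qed

lemma detT[simp]: "detq (1,k,0,1) = 1" by (simp add: detq_def)

lemma Tgrp_subgroup: "subgroup (Tgrp :: ('a::field_char_0 mat2 \<Rightarrow> 'a mat2) set) (BijGroup sl2)"
proof
  show "(Tgrp :: ('a mat2 \<Rightarrow> 'a mat2) set) \<subseteq> carrier (BijGroup sl2)"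
    by (auto simp: Tgrp_def conjM_Bij)
  show "x \<otimes>\<^bsub>BijGroup sl2\<^esub> y \<in> Tgrp" if "x \<in> Tgrp" "y \<in> Tgrp" for x y :: "'a mat2 \<Rightarrow> 'a mat2"
    using that by (auto simp: Tgrp_def conjM_mult mulq_def)
  show "\<one>\<^bsub>BijGroup sl2\<^esub> \<in> (Tgrp :: ('a mat2 \<Rightarrow> 'a mat2) set)"
    by (auto simp: Tgrp_def conjM_one)
  show "inv\<^bsub>BijGroup sl2\<^esub> x \<in> Tgrp" if "x \<in> Tgrp" for x :: "'a mat2 \<Rightarrow> 'a mat2"
    using that by (auto simp: Tgrp_def conjM_inv adjq_def)
qed

lemma Gsl2_sub: "(Gsl2 :: ('a::field_char_0 mat2 \<Rightarrow> 'a mat2) set) \<subseteq> Sgrp"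
  unfolding Gsl2_def
  apply (rule group.generate_subgroup_incl[OF group_BijGroup _ Sgrp_subgroup])
proof -
  have "detq (2,-1,1,0) = 1" "detq (1,0,1,1) = 1" "detq (1,-1,0,1) = 1" by (simp_all add: detq_def)
  thus "{exp_ad xstar, exp_ad ystar, exp_ad zstar} \<subseteq> (Sgrp :: ('a mat2 \<Rightarrow> 'a mat2) set)"
    unfolding Sgrp_def exp_x exp_y exp_z by blast
qed

lemma genz_sub: "generate (BijGroup sl2) {exp_ad zstar} \<subseteq> (Tgrp :: ('a::field_char_0 mat2 \<Rightarrow> 'a mat2) set)"
  apply (rule group.generate_subgroup_incl[OF group_BijGroup _ Tgrp_subgroup])
  apply (auto simp: exp_z Tgrp_def)
  done

lemma Tgrp_sub: "(Tgrp :: ('a::field_char_0 mat2 \<Rightarrow> 'a mat2) set) \<subseteq> generate (BijGroup sl2) {exp_ad zstar}"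
proof -
  let ?H = "generate (BijGroup (sl2::'a mat2 set)) {exp_ad zstar}"
  have sg: "subgroup ?H (BijGroup sl2)"
    by (rule group.generate_is_subgroup[OF group_BijGroup]) (simp add: exp_z conjM_Bij)
  have nat: "(conjM (1, - int n, 0, 1) :: 'a mat2 \<Rightarrow> _) \<in> ?H" for n
  proof (induction n)
    case 0 show ?case using subgroup.one_closed[OF sg] by (simp add: conjM_one)
  next
    case (Suc n)
    have "exp_ad zstar \<otimes>\<^bsub>BijGroup sl2\<^esub> conjM (1, - int n, 0, 1) \<in> ?H"
      using Suc generate.incl[of "exp_ad zstar"] by (intro subgroup.m_closed[OF sg]) auto
    thus ?case by (simp add: exp_z conjM_mult mulq_def add.commute)
  qed
  have "(conjM (1, k, 0, 1) :: 'a mat2 \<Rightarrow> _) \<in> ?H" for k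
  proof (cases "k \<le> 0")
    case True
    then show ?thesis using nat[of "nat (-k)"] by simp
  next
    case False
    have "inv\<^bsub>BijGroup sl2\<^esub> (conjM (1, - int (nat k), 0, 1) :: 'a mat2 \<Rightarrow> _) \<in> ?H"
      using subgroup.m_inv_closed[OF sg nat] .
    then show ?thesis using False by (simp add: conjM_inv adjq_def)
  qed
  thus ?thesis by (auto simp: Tgrp_def)
qed

lemma Pm_inj: "(Pm q :: 'a::field_char_0 mat2) = Pm r \<longleftrightarrow> q = r"
  by (cases q; cases r) (simp add: Pm_def)

lemma zstar_Pm: "zstar = (Pm (0,-1,0,0) :: 'a::field_char_0 mat2)"
  by (simp add: zstar_def Pm_def)

lemma zstar_sl2: "(zstar :: 'a::field_char_0 mat2) \<in> sl2"
  by (simp add: zstar_def sl2_def trace2_def)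

lemma conjM_z: "(conjM (a,b,c,d) zstar :: 'a::field_char_0 mat2) = Pm (a*c, -a*a, c*c, -a*c)"
proof -
  have "(conjM (a,b,c,d) zstar :: 'a mat2) = Pm (a,b,c,d) ** zstar ** Pm (adjq (a,b,c,d))"
    unfolding conjM_def by (rule restrict_apply'[OF zstar_sl2])
  also have "\<dots> = Pm (a*c, -a*a, c*c, -a*c)" by (simp add: zstar_def Pm_def adjq_def algebra_simps)
  finally show ?thesis .
qed

lemma conjM_neg: "(conjM (-1,b,0,-1) :: 'a::field_char_0 mat2 \<Rightarrow> _) = conjM (1,-b,0,1)"
proof
  fix m :: "'a mat2"
  show "conjM (-1,b,0,-1) m = conjM (1,-b,0,1) m"
  proof (cases "m \<in> sl2")
    case True
    then obtain p u r where m: "m = mk2 p u r (-p)" by (auto simp: sl2_iff)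
    show ?thesis unfolding conjM_def using True
      by (simp add: m Pm_def adjq_def algebra_simps)
  qed (simp add: conjM_def)
qed

lemma int_sq1: "(a::int) * a = 1 \<Longrightarrow> a = 1 \<or> a = -1"
  by (metis zmult_eq_1_iff)

theorem theorem6p6:
  shows "{g \<in> (Gsl2 :: (('a::field_char_0) mat2 \<Rightarrow> 'a mat2) set). g zstar = zstar}
         = generate (BijGroup sl2) {exp_ad zstar}"
proof
  show "{g \<in> (Gsl2 :: ('a mat2 \<Rightarrow> 'a mat2) set). g zstar = zstar} \<subseteq> generate (BijGroup sl2) {exp_ad zstar}"
  proof
    fix g :: "'a mat2 \<Rightarrow> 'a mat2"
    assume "g \<in> {g \<in> Gsl2. g zstar = zstar}"
    then have gG: "g \<in> Gsl2" and fz: "g zstar = zstar" by auto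
    from gG Gsl2_sub obtain a b c d where g: "g = conjM (a,b,c,d)" and dt: "a*d - b*c = 1"
      by (auto simp: Sgrp_def detq_def)
    from fz have "Pm (a*c, -a*a, c*c, -a*c) = (Pm (0,-1,0,0) :: 'a mat2)"
      by (simp add: g conjM_z zstar_Pm[symmetric])
    then have e: "c*c = 0" "a*a = 1" by (simp_all add: Pm_inj)
    then have c0: "c = 0" by simp
    with dt have ad1: "a*d = 1" by simp
    from e(2) have "a = 1 \<or> a = -1" by (rule int_sq1)
    then have "g \<in> Tgrp"
    proof
      assume "a = 1" thus ?thesis using ad1 c0 g by (auto simp: Tgrp_def)
    next
      assume "a = -1" 
      then have "d = -1" using ad1 by simp
      thus ?thesis using \<open>a = -1\<close> c0 g conjM_neg[of b] by (auto simp: Tgrp_def)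
    qed
    thus "g \<in> generate (BijGroup sl2) {exp_ad zstar}" using Tgrp_sub by blast
  qed
next
  show "generate (BijGroup sl2) {exp_ad zstar} \<subseteq> {g \<in> (Gsl2 :: ('a mat2 \<Rightarrow> 'a mat2) set). g zstar = zstar}"
  proof
    fix g :: "'a mat2 \<Rightarrow> 'a mat2"
    assume h: "g \<in> generate (BijGroup sl2) {exp_ad zstar}"
    have "g \<in> Gsl2" using h unfolding Gsl2_def
      using group.mono_generate[OF group_BijGroup, of "{exp_ad zstar}" "{exp_ad xstar, exp_ad ystar, exp_ad zstar}"]
      by auto
    moreover obtain k where "g = conjM (1,k,0,1)" using h genz_sub by (auto simp: Tgrp_def)
    then have "g zstar = zstar" by (simp add: conjM_z zstar_Pm[symmetric])
    ultimately show "g \<in> {g \<in> Gsl2. g zstar = zstar}" by simp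
  qed
qed

end
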